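(* Let $S=\{s_0,\dots,s_n\}$ be the vertex set of a regular simplex in $\mathbb{R}^n$. There exists $\delta>0$ such that every set $A=\{a_0,\dots,a_n\}\subset\mathbb{R}^n$ with $|a_i-s_i|<\delta$ for all $i$ is Euclidean sub-$p$-toral for every prime $p\ge 2$.
   Context: A $p$-torus is a group isomorphic to $(\mathbb{Z}_p)^\alpha$ for some $\alpha\ge1$. A set $X\subset\mathbb{R}^k$ is Euclidean sub-$p$-toral if there exist $n\ge k$, a $p$-torus $G$ and an action of $G$ on $\mathbb{R}^n$ by isometries such that $X$ (viewed in $\mathbb{R}^n$ via the standard inclusion $\mathbb{R}^k\subset\mathbb{R}^n$) is contained in a single $G$-orbit. *)

theory Defs
  imports Complex_Main "HOL-Computational_Algebra.Primes"
    "HOL-Algebra.Group_Action" "HOL-Algebra.Elementary_Groups" "HOL-Algebra.Product_Groups"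
begin

text \<open>Euclidean space R^m, realised as real sequences vanishing from index m on.
  With this convention the standard inclusion R^k into R^m (k \<le> m) is the identity.\<close>
definition euclid :: "nat \<Rightarrow> (nat \<Rightarrow> real) set" where
  "euclid m = {x. \<forall>i\<ge>m. x i = 0}"

definition edist :: "nat \<Rightarrow> (nat \<Rightarrow> real) \<Rightarrow> (nat \<Rightarrow> real) \<Rightarrow> real" where
  "edist m x y = sqrt (\<Sum>i<m. (x i - y i)^2)"

definition p_torus :: "nat \<Rightarrow> ('g, 'c) monoid_scheme \<Rightarrow> bool" where
  "p_torus p G \<longleftrightarrow> (\<exists>\<alpha>::nat. \<alpha> \<ge> 1 \<and> G \<cong> product_group {..<\<alpha>} (\<lambda>_. integer_mod_group p))"

definition sub_p_toral :: "nat \<Rightarrow> nat \<Rightarrow> (nat \<Rightarrow> real) set \<Rightarrow> bool" where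
  "sub_p_toral p k X \<longleftrightarrow> X \<subseteq> euclid k \<and>
     (\<exists>m\<ge>k. \<exists>(G :: (nat \<Rightarrow> int) monoid) \<phi>.
        p_torus p G \<and> group_action G (euclid m) \<phi> \<and>
        (\<forall>g\<in>carrier G. \<forall>x\<in>euclid m. \<forall>y\<in>euclid m. edist m (\<phi> g x) (\<phi> g y) = edist m x y) \<and>
        (\<exists>x\<in>euclid m. X \<subseteq> orbit G \<phi> x))"

definition regular_simplex :: "nat \<Rightarrow> (nat \<Rightarrow> nat \<Rightarrow> real) \<Rightarrow> bool" where
  "regular_simplex n s \<longleftrightarrow> (\<forall>i\<le>n. s i \<in> euclid n) \<and>
     (\<exists>d>0. \<forall>i\<le>n. \<forall>j\<le>n. i \<noteq> j \<longrightarrow> edist n (s i) (s j) = d)"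

end

theory Submission
  imports Defs "HOL-Analysis.L2_Norm"
begin

definition sq :: "nat \<Rightarrow> (nat \<Rightarrow> real) \<Rightarrow> (nat \<Rightarrow> real) \<Rightarrow> real" where
  "sq m x y = (\<Sum>i<m. (x i - y i)^2)"

lemma edist_sq: "edist m x y = sqrt (sq m x y)"
  by (simp add: edist_def sq_def)

lemma sq_nonneg: "sq m x y \<ge> 0"
  unfolding sq_def by (simp add: sum_nonneg)

lemma sq_sym: "sq m x y = sq m y x"
  unfolding sq_def by (simp add: power2_commute)

lemma sq_self[simp]: "sq m x x = 0"
  unfolding sq_def by simp

lemma sq_pos:
  assumes "x \<in> euclid m" "y \<in> euclid m" "x \<noteq> y"
  shows "sq m x y > 0"
proof -
  obtain i where i: "x i \<noteq> y i" using assms(3) by auto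
  have im: "i < m"
  proof (rule ccontr)
    assume "\<not> i < m"
    then have "x i = 0" "y i = 0" using assms(1,2) unfolding euclid_def by auto
    with i show False by simp
  qed
  have "(x i - y i)^2 > 0" using i by simp
  also have "(x i - y i)^2 \<le> sq m x y" unfolding sq_def
    by (rule member_le_sum) (use im in auto)
  finally show ?thesis .
qed

definition isoE :: "nat \<Rightarrow> ((nat \<Rightarrow> real) \<Rightarrow> (nat \<Rightarrow> real)) \<Rightarrow> bool" where
  "isoE m F \<longleftrightarrow> bij_betw F (euclid m) (euclid m) \<and>
     (\<forall>x\<in>euclid m. \<forall>y\<in>euclid m. sq m (F x) (F y) = sq m x y)"

definition refl_map :: "nat \<Rightarrow> (nat \<Rightarrow> real) \<Rightarrow> (nat \<Rightarrow> real) \<Rightarrow> (nat \<Rightarrow> real) \<Rightarrow> (nat \<Rightarrow> real)" where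
  "refl_map m b c x = (let W = sq m b c; t = 2 * (\<Sum>i<m. (x i - (b i + c i)/2) * (b i - c i)) / W
     in (\<lambda>i. x i - t * (b i - c i)))"

lemma refl_props:
  assumes b: "b \<in> euclid m" and c: "c \<in> euclid m" and bc: "b \<noteq> c"
  shows "isoE m (refl_map m b c)" "refl_map m b c b = c"
    "\<And>z. z \<in> euclid m \<Longrightarrow> sq m z b = sq m z c \<Longrightarrow> refl_map m b c z = z"
proof -
  define W where "W = sq m b c"
  have Wpos: "W > 0" unfolding W_def using sq_pos[OF b c bc] .
  have WW: "W = (\<Sum>i<m. (b i - c i) * (b i - c i))" unfolding W_def sq_def by (simp add: power2_eq_square)
  define P where "P x = (\<Sum>i<m. (x i - (b i + c i)/2) * (b i - c i))" for x
  define t where "t x = 2 * P x / W" for x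
  have R: "refl_map m b c x = (\<lambda>i. x i - t x * (b i - c i))" for x
    unfolding refl_map_def t_def P_def W_def Let_def by simp
  have Pr: "P (refl_map m b c x) = P x - t x * W" for x
  proof -
    have "P (refl_map m b c x) = (\<Sum>i<m. (x i - (b i + c i)/2) * (b i - c i) - t x * ((b i - c i) * (b i - c i)))"
      unfolding R P_def by (rule sum.cong) (auto simp: algebra_simps)
    also have "\<dots> = P x - t x * W" unfolding P_def WW
      by (simp add: sum_subtractf sum_distrib_left)
    finally show ?thesis .
  qed
  have inv: "refl_map m b c (refl_map m b c x) = x" for x
  proof -
    have "t (refl_map m b c x) = - t x" unfolding t_def Pr using Wpos by (simp add: field_simps)
    then show ?thesis unfolding R[of "refl_map m b c x"] by (simp add: R)
  qed
  have inE: "refl_map m b c x \<in> euclid m" if "x \<in> euclid m" for x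
    using that b c unfolding euclid_def R by auto
  have dist: "sq m (refl_map m b c x) (refl_map m b c y) = sq m x y" for x y
  proof -
    define Q where "Q = (\<Sum>i<m. (x i - y i) * (b i - c i))"
    have tt: "t x - t y = 2 * Q / W"
    proof -
      have "P x - P y = Q" unfolding P_def Q_def sum_subtractf[symmetric]
        by (rule sum.cong) (auto simp: algebra_simps)
      then show ?thesis unfolding t_def by (simp add: diff_divide_distrib[symmetric])
    qed
    have "sq m (refl_map m b c x) (refl_map m b c y)
       = (\<Sum>i<m. (x i - y i)^2 - 2 * (t x - t y) * ((x i - y i) * (b i - c i)) + (t x - t y)^2 * ((b i - c i) * (b i - c i)))"
      unfolding sq_def R by (rule sum.cong) (auto simp: power2_eq_square algebra_simps)
    also have "\<dots> = sq m x y - 2 * (t x - t y) * Q + (t x - t y)^2 * W"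
      unfolding sq_def Q_def WW by (simp add: sum.distrib sum_subtractf sum_distrib_left)
    also have "\<dots> = sq m x y" unfolding tt using Wpos by (simp add: field_simps power2_eq_square)
    finally show ?thesis .
  qed
  show "isoE m (refl_map m b c)" unfolding isoE_def
    by (intro conjI ballI dist bij_betw_byWitness[where f'="refl_map m b c"]) (auto simp: inv inE)
  have "P b = W / 2" unfolding P_def WW sum_divide_distrib
    by (rule sum.cong) (auto simp: field_simps)
  then have "t b = 1" unfolding t_def using Wpos by simp
  then show "refl_map m b c b = c" unfolding R by simp
  fix z assume z: "z \<in> euclid m" "sq m z b = sq m z c"
  have "P z = (sq m z c - sq m z b) / 2" unfolding P_def sq_def sum_subtractf[symmetric] sum_divide_distrib
    by (rule sum.cong) (auto simp: power2_eq_square field_simps)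
  then have "t z = 0" using z unfolding t_def by simp
  then show "refl_map m b c z = z" unfolding R by simp
qed

lemma isoE_id: "isoE m (\<lambda>x. x)"
  unfolding isoE_def by (simp add: bij_betw_id[unfolded id_def])

lemma isoE_comp:
  assumes "isoE m F" "isoE m H" shows "isoE m (H \<circ> F)"
proof -
  have FE: "\<forall>x\<in>euclid m. F x \<in> euclid m" using assms(1) unfolding isoE_def bij_betw_def by auto
  then show ?thesis using assms unfolding isoE_def by (auto intro: bij_betw_trans)
qed

lemma extend_iso:
  fixes n :: nat
  assumes u: "\<forall>i\<le>n. u i \<in> euclid m" and a: "\<forall>i\<le>n. a i \<in> euclid m"
    and d: "\<forall>i\<le>n. \<forall>j\<le>n. sq m (u i) (u j) = sq m (a i) (a j)"
  shows "\<exists>F. isoE m F \<and> (\<forall>i\<le>n. F (u i) = a i)"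
proof -
  have "r \<le> Suc n \<Longrightarrow> \<exists>F. isoE m F \<and> (\<forall>i<r. F (u i) = a i)" for r
  proof (induction r)
    case 0
    then show ?case using isoE_id by blast
  next
    case (Suc r)
    then obtain F where F: "isoE m F" "\<forall>i<r. F (u i) = a i" by auto
    have rn: "r \<le> n" using Suc.prems by simp
    define b where "b = F (u r)"
    have bE: "b \<in> euclid m" unfolding b_def using F(1) u rn unfolding isoE_def
      by (auto dest: bij_betwE)
    have aE: "a r \<in> euclid m" using a rn by auto
    have dj: "sq m (a j) b = sq m (a j) (a r)" if "j < r" for j
    proof -
      have "sq m (a j) b = sq m (F (u j)) (F (u r))" using F(2) that b_def by simp
      also have "\<dots> = sq m (u j) (u r)" using F(1) u rn that unfolding isoE_def by auto
      also have "\<dots> = sq m (a j) (a r)" using d rn that by auto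
      finally show ?thesis .
    qed
    show ?case
    proof (cases "b = a r")
      case True
      then show ?thesis using F b_def by (metis less_Suc_eq)
    next
      case False
      note R = refl_props[OF bE aE False]
      have "isoE m (refl_map m b (a r) \<circ> F)" using isoE_comp[OF F(1) R(1)] .
      moreover have "\<forall>i<Suc r. (refl_map m b (a r) \<circ> F) (u i) = a i"
      proof (intro allI impI)
        fix i assume "i < Suc r"
        then consider "i < r" | "i = r" by linarith
        then show "(refl_map m b (a r) \<circ> F) (u i) = a i"
        proof cases
          case 1
          then show ?thesis using F(2) R(3)[of "a i"] dj[OF 1] a rn by simp
        next
          case 2
          then show ?thesis using R(2) b_def by simp
        qed
      qed
      ultimately show ?thesis by blast
    qed
  qed
  from this[of "Suc n"] show ?thesis by auto
qed

lemma action_from_T: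
  assumes G: "group G"
    and Tc: "\<And>g x. g \<in> carrier G \<Longrightarrow> x \<in> E \<Longrightarrow> T g x \<in> E"
    and Tm: "\<And>g h x. g \<in> carrier G \<Longrightarrow> h \<in> carrier G \<Longrightarrow> x \<in> E \<Longrightarrow> T (g \<otimes>\<^bsub>G\<^esub> h) x = T g (T h x)"
    and T1: "\<And>x. x \<in> E \<Longrightarrow> T \<one>\<^bsub>G\<^esub> x = x"
  shows "group_action G E (\<lambda>g. \<lambda>x\<in>E. T g x)"
proof -
  have bij: "(\<lambda>x\<in>E. T g x) \<in> Bij E" if g: "g \<in> carrier G" for g
  proof -
    have ig: "inv\<^bsub>G\<^esub> g \<in> carrier G" using G g by (simp add: group.inv_closed)
    have "bij_betw (T g) E E"
    proof (rule bij_betw_byWitness[where f'="T (inv\<^bsub>G\<^esub> g)"])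
      show "\<forall>x\<in>E. T (inv\<^bsub>G\<^esub> g) (T g x) = x"
        using Tm[OF ig g] T1 G g by (simp add: group.l_inv)
      show "\<forall>x\<in>E. T g (T (inv\<^bsub>G\<^esub> g) x) = x"
        using Tm[OF g ig] T1 G g by (simp add: group.r_inv)
    qed (use Tc g ig in auto)
    then have "bij_betw (\<lambda>x\<in>E. T g x) E E" by (rule bij_betw_cong[THEN iffD1, rotated]) auto
    then show ?thesis unfolding Bij_def by auto
  qed
  show ?thesis
    unfolding group_action_def group_hom_def group_hom_axioms_def
  proof (intro conjI G group_BijGroup)
    show "(\<lambda>g. \<lambda>x\<in>E. T g x) \<in> hom G (BijGroup E)"
    proof (rule homI)
      show "(\<lambda>x\<in>E. T g x) \<in> carrier (BijGroup E)" if "g \<in> carrier G" for g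
        using bij[OF that] by (simp add: BijGroup_def)
      fix g h assume g: "g \<in> carrier G" and h: "h \<in> carrier G"
      show "(\<lambda>x\<in>E. T (g \<otimes>\<^bsub>G\<^esub> h) x) = (\<lambda>x\<in>E. T g x) \<otimes>\<^bsub>BijGroup E\<^esub> (\<lambda>x\<in>E. T h x)"
        using bij[OF g] bij[OF h] Tm[OF g h] Tc[OF h]
        by (auto simp: BijGroup_def compose_def)
    qed
  qed
qed

lemma cs_mod:
  assumes "p > 0"
  shows "cos (2*pi*of_int (s mod int p) / real p) = cos (2*pi*of_int s / real p)"
        "sin (2*pi*of_int (s mod int p) / real p) = sin (2*pi*of_int s / real p)"
proof -
  have e: "2*pi*of_int (s mod int p) / real p = 2*pi*of_int s / real p - 2*pi*of_int (s div int p)"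
  proof -
    have "s = s mod int p + int p * (s div int p)" by simp
    then have "real_of_int s = real_of_int (s mod int p) + real p * real_of_int (s div int p)"
      by (metis of_int_add of_int_mult of_int_of_nat_eq)
    then show ?thesis using assms by (simp add: field_simps)
  qed
  show "cos (2*pi*of_int (s mod int p) / real p) = cos (2*pi*of_int s / real p)"
    unfolding e cos_diff by (simp add: cos_int_2pin sin_int_2pin)
  show "sin (2*pi*of_int (s mod int p) / real p) = sin (2*pi*of_int s / real p)"
    unfolding e sin_diff by (simp add: cos_int_2pin sin_int_2pin)
qed

definition ang :: "nat \<Rightarrow> (nat \<Rightarrow> int) \<Rightarrow> nat \<Rightarrow> real" where
  "ang p g q = 2*pi*of_int (g q) / real p"

definition rot :: "nat \<Rightarrow> nat \<Rightarrow> (nat \<Rightarrow> int) \<Rightarrow> (nat \<Rightarrow> real) \<Rightarrow> (nat \<Rightarrow> real)" where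
  "rot K p g x = (\<lambda>i. if i < 2*K then
      (if even i then cos (ang p g (i div 2)) * x (2*(i div 2)) - sin (ang p g (i div 2)) * x (2*(i div 2)+1)
       else sin (ang p g (i div 2)) * x (2*(i div 2)) + cos (ang p g (i div 2)) * x (2*(i div 2)+1))
     else x i)"

abbreviation TG :: "nat \<Rightarrow> nat \<Rightarrow> (nat \<Rightarrow> int) monoid" where
  "TG K p \<equiv> product_group {..<K} (\<lambda>_. integer_mod_group p)"

lemma rot_even: "q < K \<Longrightarrow> rot K p g x (2*q) = cos (ang p g q) * x (2*q) - sin (ang p g q) * x (2*q+1)"
  unfolding rot_def by simp

lemma rot_odd: "q < K \<Longrightarrow> rot K p g x (2*q+1) = sin (ang p g q) * x (2*q) + cos (ang p g q) * x (2*q+1)"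
  unfolding rot_def by simp

lemma rot_closed: "x \<in> euclid (2*K) \<Longrightarrow> rot K p g x \<in> euclid (2*K)"
  unfolding euclid_def rot_def by auto

lemma ang_mult:
  assumes "p > 0" "q < K"
  shows "cos (ang p (g \<otimes>\<^bsub>TG K p\<^esub> h) q) = cos (ang p g q + ang p h q)"
        "sin (ang p (g \<otimes>\<^bsub>TG K p\<^esub> h) q) = sin (ang p g q + ang p h q)"
  using cs_mod[OF assms(1), of "g q + h q"] assms
  by (simp_all add: ang_def add_divide_distrib distrib_left)

lemma rot_mult:
  assumes "p > 0"
  shows "rot K p (g \<otimes>\<^bsub>TG K p\<^esub> h) x = rot K p g (rot K p h x)"
proof
  fix i
  show "rot K p (g \<otimes>\<^bsub>TG K p\<^esub> h) x i = rot K p g (rot K p h x) i"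
  proof (cases "i < 2*K")
    case True
    define q where "q = i div 2"
    have q: "q < K" using True q_def by simp
    have rh: "rot K p h x (2*q) = cos (ang p h q) * x (2*q) - sin (ang p h q) * x (2*q+1)"
             "rot K p h x (2*q+1) = sin (ang p h q) * x (2*q) + cos (ang p h q) * x (2*q+1)"
      using rot_even[OF q] rot_odd[OF q] by auto
    show ?thesis
    proof (cases "even i")
      case True
      then have i: "i = 2*q" using q_def by auto
      show ?thesis unfolding i rot_even[OF q] rh ang_mult[OF assms q] cos_add sin_add
        by (simp add: algebra_simps)
    next
      case False
      then have i: "i = 2*q+1" using q_def by auto
      show ?thesis unfolding i rot_odd[OF q] rh ang_mult[OF assms q] cos_add sin_add
        by (simp add: algebra_simps)
    qed
  next
    case False
    then show ?thesis unfolding rot_def by simp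
  qed
qed

lemma rot_one: "rot K p \<one>\<^bsub>TG K p\<^esub> x = x"
  unfolding rot_def ang_def by (auto intro!: ext simp: mult_2[symmetric])

lemma sum_pairs: "(\<Sum>i<2*(K::nat). (f::nat\<Rightarrow>real) i) = (\<Sum>q<K. f (2*q) + f (2*q+1))"
  using sum_split_even_odd[where n=K and f=f and g=f] by (simp add: sum.distrib)

lemma rot_iso: "sq (2*K) (rot K p g x) (rot K p g y) = sq (2*K) x y"
proof -
  have "sq (2*K) (rot K p g x) (rot K p g y)
      = (\<Sum>q<K. (rot K p g x (2*q) - rot K p g y (2*q))^2 + (rot K p g x (2*q+1) - rot K p g y (2*q+1))^2)"
    unfolding sq_def sum_pairs ..
  also have "\<dots> = (\<Sum>q<K. (x (2*q) - y (2*q))^2 + (x (2*q+1) - y (2*q+1))^2)"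
  proof (rule sum.cong)
    fix q assume "q \<in> {..<K}"
    then have q: "q < K" by simp
    define c where "c = cos (ang p g q)"
    define s where "s = sin (ang p g q)"
    have cs: "c^2 + s^2 = 1" unfolding c_def s_def by simp
    have "(c * x (2*q) - s * x (2*q+1) - (c * y (2*q) - s * y (2*q+1)))^2 +
          (s * x (2*q) + c * x (2*q+1) - (s * y (2*q) + c * y (2*q+1)))^2
         = (c^2 + s^2) * ((x (2*q) - y (2*q))^2 + (x (2*q+1) - y (2*q+1))^2)"
      by (simp add: power2_eq_square algebra_simps)
    then show "(rot K p g x (2*q) - rot K p g y (2*q))^2 + (rot K p g x (2*q+1) - rot K p g y (2*q+1))^2
        = (x (2*q) - y (2*q))^2 + (x (2*q+1) - y (2*q+1))^2"
      unfolding rot_even[OF q] rot_odd[OF q] c_def[symmetric] s_def[symmetric] cs by simp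
  qed simp
  also have "\<dots> = sq (2*K) x y" unfolding sq_def sum_pairs ..
  finally show ?thesis .
qed

lemma sum_lessThan_add_nat: "(\<Sum>q<N+M. (f::nat\<Rightarrow>real) q) = (\<Sum>q<N. f q) + (\<Sum>r<M. f (N+r))"
  by (induction M) auto

lemma sum_lessThan_mult_nat: "(\<Sum>r<M*N. (h::nat\<Rightarrow>real) r) = (\<Sum>k<M. \<Sum>l<N. h (k*N+l))"
proof (induction M)
  case (Suc M)
  have "(\<Sum>r<Suc M*N. h r) = (\<Sum>r<M*N + N. h r)" by (simp add: add.commute)
  also have "\<dots> = (\<Sum>r<M*N. h r) + (\<Sum>l<N. h (M*N+l))" by (rule sum_lessThan_add_nat)
  finally show ?case using Suc by simp
qed simp

definition ind :: "bool \<Rightarrow> real" where "ind b = (if b then 1 else 0)"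

lemma pair_sum:
  fixes f :: "nat \<Rightarrow> nat \<Rightarrow> real"
  assumes ij: "i \<noteq> j" "i < N" "j < N"
  shows "(\<Sum>k<N. \<Sum>l<N. f k l * ind ((i = k \<or> i = l) \<noteq> (j = k \<or> j = l)))
     = (\<Sum>l<N. f i l) + (\<Sum>k<N. f k i) - f i i + (\<Sum>l<N. f j l) + (\<Sum>k<N. f k j) - f j j - 2 * f i j - 2 * f j i"
proof -
  have F: "(\<Sum>l<N. f k l * ind ((i = k \<or> i = l) \<noteq> (j = k \<or> j = l)))
      = (f k i + f k j) + ind (k = i) * ((\<Sum>l<N. f i l) - 2 * f i j - f i i)
           + ind (k = j) * ((\<Sum>l<N. f j l) - 2 * f j i - f j j)" if k: "k < N" for k
  proof -
    consider "k = i" | "k = j" | "k \<noteq> i" "k \<noteq> j" by blast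
    then show ?thesis
    proof cases
      case 1
      have "(\<Sum>l<N. f k l * ind ((i = k \<or> i = l) \<noteq> (j = k \<or> j = l))) = (\<Sum>l<N. f i l - (if l = j then f i j else 0))"
        using 1 ij by (intro sum.cong) (auto simp: ind_def)
      also have "\<dots> = (\<Sum>l<N. f i l) - f i j" using ij by (simp add: sum_subtractf)
      finally show ?thesis using 1 ij by (simp add: ind_def)
    next
      case 2
      have "(\<Sum>l<N. f k l * ind ((i = k \<or> i = l) \<noteq> (j = k \<or> j = l))) = (\<Sum>l<N. f j l - (if l = i then f j i else 0))"
        using 2 ij by (intro sum.cong) (auto simp: ind_def)
      also have "\<dots> = (\<Sum>l<N. f j l) - f j i" using ij by (simp add: sum_subtractf)
      finally show ?thesis using 2 ij by (simp add: ind_def)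
    next
      case 3
      have "(\<Sum>l<N. f k l * ind ((i = k \<or> i = l) \<noteq> (j = k \<or> j = l))) = (\<Sum>l<N. (if l = i then f k i else 0) + (if l = j then f k j else 0))"
        using 3 ij by (intro sum.cong) (auto simp: ind_def)
      also have "\<dots> = f k i + f k j" using ij by (simp add: sum.distrib)
      finally show ?thesis using 3 ij by (simp add: ind_def)
    qed
  qed
  have "(\<Sum>k<N. \<Sum>l<N. f k l * ind ((i = k \<or> i = l) \<noteq> (j = k \<or> j = l)))
      = (\<Sum>k<N. (f k i + f k j) + (if k = i then (\<Sum>l<N. f i l) - 2 * f i j - f i i else 0)
           + (if k = j then (\<Sum>l<N. f j l) - 2 * f j i - f j j else 0))"
  proof (rule sum.cong)
    fix k assume "k \<in> {..<N}"
    then have "k < N" by simp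
    from F[OF this] show "(\<Sum>l<N. f k l * ind ((i = k \<or> i = l) \<noteq> (j = k \<or> j = l))) = (f k i + f k j) + (if k = i then (\<Sum>l<N. f i l) - 2 * f i j - f i i else 0)
           + (if k = j then (\<Sum>l<N. f j l) - 2 * f j i - f j j else 0)"
      by (simp add: ind_def)
  qed simp
  also have "\<dots> = (\<Sum>k<N. f k i) + (\<Sum>k<N. f k j) + ((\<Sum>l<N. f i l) - 2 * f i j - f i i)
        + ((\<Sum>l<N. f j l) - 2 * f j i - f j j)"
    using ij by (simp add: sum.distrib)
  finally show ?thesis by simp
qed

lemma star_sum:
  fixes b :: "nat \<Rightarrow> real"
  assumes ij: "i \<noteq> j" "i < N" "j < N"
  shows "(\<Sum>q<N. b q * ind ((i = q) \<noteq> (j = q))) = b i + b j"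
proof -
  have "(\<Sum>q<N. b q * ind ((i = q) \<noteq> (j = q))) = (\<Sum>q<N. (if q = i then b i else 0) + (if q = j then b j else 0))"
    using ij by (intro sum.cong) (auto simp: ind_def)
  also have "\<dots> = b i + b j" using ij by (simp add: sum.distrib)
  finally show ?thesis .
qed

lemma main_construct:
  fixes n p :: nat and a :: "nat \<Rightarrow> nat \<Rightarrow> real" and D :: real
  assumes p: "prime p" and aE: "\<forall>i\<le>n. a i \<in> euclid n" and D: "D > 0"
    and eb: "\<forall>k\<le>n. \<forall>l\<le>n. k \<noteq> l \<longrightarrow> \<bar>sq n (a k) (a l) - D\<bar> \<le> D / (2 * real (Suc n))"
  shows "sub_p_toral p n (a ` {..n})"
proof -
  define N where "N = Suc n"
  define K where "K = N + N * N"
  define m where "m = 2 * K"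
  have p2: "p \<ge> 2" using p by (simp add: prime_ge_2_nat)
  have p0: "p > 0" using p2 by simp
  have nm: "n \<le> m" unfolding m_def K_def N_def by simp
  have K1: "K \<ge> 1" unfolding K_def N_def by simp
  define lab :: "nat \<Rightarrow> nat \<Rightarrow> int" where
    "lab i q = (if q < N then (if i = q then 1 else 0)
                else (if i = (q - N) div N \<or> i = (q - N) mod N then 1 else 0))" for i q
  define gg where "gg i = (\<lambda>q\<in>{..<K}. lab i q)" for i
  define e where "e k l = (if k = l then 0 else sq n (a k) (a l) - D)" for k l
  define E where "E k = (\<Sum>t<N. e k t)" for k
  define \<alpha> where "\<alpha> = D / (8 * real N)"
  define \<beta> where "\<beta> = (D - (4 * real N - 6) * \<alpha>) / 2"
  define c where "c q = (if q < N then \<beta> + E q / 2 else \<alpha> - e ((q - N) div N) ((q - N) mod N) / 4)" for q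
  define \<kappa> where "\<kappa> = 2 - 2 * cos (2 * pi / real p)"
  define w where "w = (\<lambda>i. if i < 2 * K \<and> even i then sqrt (c (i div 2) / \<kappa>) else 0)"
  define u where "u i = rot K p (gg i) w" for i
  define G where "G = TG K p"
  have N1: "real N \<ge> 1" unfolding N_def by simp
  have e_sym: "e k l = e l k" for k l unfolding e_def by (simp add: sq_sym)
  have e_bd: "\<bar>e k l\<bar> \<le> D / (2 * real N)" if "k < N" "l < N" for k l
    using eb that D unfolding e_def N_def by (cases "k = l") auto
  have \<kappa>pos: "\<kappa> > 0"
  proof -
    have "cos (2 * pi / real p) < cos 0"
    proof (rule cos_monotone_0_pi)
      show "0 < 2 * pi / real p" using p0 by simp
      show "2 * pi / real p \<le> pi" using p2 by (simp add: field_simps)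
    qed simp
    then show ?thesis unfolding \<kappa>_def by simp
  qed
  have c_nonneg: "c q \<ge> 0" if "q < K" for q
  proof (cases "q < N")
    case True
    have "(\<Sum>t<N. - (D / (2 * real N))) \<le> E q" unfolding E_def
    proof (rule sum_mono)
      fix t assume "t \<in> {..<N}"
      then have "\<bar>e q t\<bar> \<le> D / (2 * real N)" using e_bd True by simp
      then show "- (D / (2 * real N)) \<le> e q t" by linarith
    qed
    moreover have "(\<Sum>t<N. - (D / (2 * real N))) = - D / 2" using N1 by simp
    ultimately have "E q \<ge> - D / 2" by simp
    moreover have "\<beta> \<ge> D / 4"
    proof -
      have "(4 * real N - 6) * \<alpha> \<le> D / 2" unfolding \<alpha>_def using N1 D by (simp add: field_simps)
      then show ?thesis unfolding \<beta>_def by simp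
    qed
    ultimately show ?thesis unfolding c_def using True by simp
  next
    case False
    have "q - N < N * N" using that False unfolding K_def by simp
    then have "(q - N) div N < N" by (rule less_mult_imp_div_less)
    moreover have "(q - N) mod N < N" unfolding N_def by simp
    ultimately have "\<bar>e ((q - N) div N) ((q - N) mod N)\<bar> \<le> D / (2 * real N)" by (rule e_bd)
    then have "e ((q - N) div N) ((q - N) mod N) / 4 \<le> \<alpha>" unfolding \<alpha>_def by simp
    then show ?thesis unfolding c_def using False by simp
  qed
  have lab01: "lab i q = 0 \<or> lab i q = 1" for i q unfolding lab_def by auto
  have ang_lab: "ang p (gg i) q = 2*pi*of_int (lab i q)/real p" if "q < K" for i q
    using that by (simp add: ang_def gg_def)
  have gg_carrier: "gg i \<in> carrier G" for i
  proof -
    have "lab i q \<in> {0..<int p}" for q using lab01[of i q] p2 by auto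
    then show ?thesis unfolding G_def gg_def by (auto simp: carrier_integer_mod_group)
  qed
  have wE: "w \<in> euclid m" unfolding w_def euclid_def m_def by auto
  have w_odd: "w (2*q+1) = 0" for q unfolding w_def by simp
  have w_even: "w (2*q) = sqrt (c q / \<kappa>)" if "q < K" for q unfolding w_def using that by simp
  have uE: "u i \<in> euclid m" for i unfolding u_def m_def using rot_closed wE m_def by simp
  have aux: "(cos x * r - cos 0 * r)^2 + (sin x * r - sin 0 * r)^2 = r^2 * (2 - 2 * cos x)" for x r :: real
  proof -
    define S where "S = sin x"
    define C where "C = cos x"
    have 1: "S^2 + C^2 = 1" unfolding S_def C_def by simp
    have "(cos x * r - cos 0 * r)^2 + (sin x * r - sin 0 * r)^2 = (C * r - r)^2 + (S * r)^2"
      unfolding S_def C_def by simp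
    also have "\<dots> = r^2 * (S^2 + C^2) + r^2 - 2 * r^2 * C"
      by (simp add: power2_eq_square algebra_simps)
    also have "\<dots> = r^2 * (2 - 2 * C)" unfolding 1 by (simp add: algebra_simps)
    finally show ?thesis unfolding C_def .
  qed
  have claim2: "sq m (u i) (u j) = (\<Sum>q<K. c q * ind (lab i q \<noteq> lab j q))" for i j
  proof -
    have "sq m (u i) (u j) = (\<Sum>q<K. (u i (2*q) - u j (2*q))^2 + (u i (2*q+1) - u j (2*q+1))^2)"
      unfolding sq_def m_def by (rule sum_pairs)
    also have "\<dots> = (\<Sum>q<K. c q * ind (lab i q \<noteq> lab j q))"
    proof (rule sum.cong)
      fix q assume "q \<in> {..<K}"
      then have q: "q < K" by simp
      define r where "r = sqrt (c q / \<kappa>)"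
      have r2: "r^2 = c q / \<kappa>" unfolding r_def using c_nonneg[OF q] \<kappa>pos by simp
      have U: "u t (2*q) = cos (2*pi*of_int (lab t q)/real p) * r"
              "u t (2*q+1) = sin (2*pi*of_int (lab t q)/real p) * r" for t
        unfolding u_def rot_even[OF q] rot_odd[OF q] ang_lab[OF q] w_odd w_even[OF q] r_def by simp_all
      show "(u i (2*q) - u j (2*q))^2 + (u i (2*q+1) - u j (2*q+1))^2 = c q * ind (lab i q \<noteq> lab j q)"
      proof (cases "lab i q = lab j q")
        case True
        then show ?thesis unfolding U by (simp add: ind_def)
      next
        case False
        then have "(lab i q = 1 \<and> lab j q = 0) \<or> (lab i q = 0 \<and> lab j q = 1)" using lab01[of i q] lab01[of j q] by auto
        then have "(u i (2*q) - u j (2*q))^2 + (u i (2*q+1) - u j (2*q+1))^2 = r^2 * \<kappa>"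
        proof
          assume "lab i q = 1 \<and> lab j q = 0"
          then show ?thesis unfolding U \<kappa>_def using aux[of "2*pi/real p" r] by simp
        next
          assume "lab i q = 0 \<and> lab j q = 1"
          then show ?thesis unfolding U \<kappa>_def using aux[of "2*pi/real p" r]
            by (simp add: power2_commute)
        qed
        then show ?thesis using False r2 \<kappa>pos by (simp add: ind_def)
      qed
    qed simp
    finally show ?thesis .
  qed
  have claim3: "(\<Sum>q<K. c q * ind (lab i q \<noteq> lab j q)) = sq n (a i) (a j)"
    if ij: "i \<noteq> j" "i < N" "j < N" for i j
  proof -
    define f where "f k l = \<alpha> - e k l / 4" for k l
    have "(\<Sum>q<K. c q * ind (lab i q \<noteq> lab j q))
        = (\<Sum>q<N. c q * ind (lab i q \<noteq> lab j q)) + (\<Sum>r<N*N. c (N+r) * ind (lab i (N+r) \<noteq> lab j (N+r)))"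
      unfolding K_def by (rule sum_lessThan_add_nat)
    also have "(\<Sum>q<N. c q * ind (lab i q \<noteq> lab j q)) = (\<Sum>q<N. (\<beta> + E q / 2) * ind ((i = q) \<noteq> (j = q)))"
      by (rule sum.cong) (auto simp: c_def lab_def ind_def)
    also have "\<dots> = (\<beta> + E i / 2) + (\<beta> + E j / 2)" by (rule star_sum[OF ij])
    also have "(\<Sum>r<N*N. c (N+r) * ind (lab i (N+r) \<noteq> lab j (N+r)))
        = (\<Sum>k<N. \<Sum>l<N. c (N+(k*N+l)) * ind (lab i (N+(k*N+l)) \<noteq> lab j (N+(k*N+l))))"
      by (rule sum_lessThan_mult_nat)
    also have "\<dots> = (\<Sum>k<N. \<Sum>l<N. f k l * ind ((i = k \<or> i = l) \<noteq> (j = k \<or> j = l)))"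
    proof (intro sum.cong refl)
      fix k l assume "k \<in> {..<N}" "l \<in> {..<N}"
      then have kl: "k < N" "l < N" by auto
      have d: "(k*N+l) div N = k" "(k*N+l) mod N = l" using kl by auto
      show "c (N+(k*N+l)) * ind (lab i (N+(k*N+l)) \<noteq> lab j (N+(k*N+l))) = f k l * ind ((i = k \<or> i = l) \<noteq> (j = k \<or> j = l))"
        unfolding c_def lab_def f_def using d by (auto simp: ind_def)
    qed
    also have "\<dots> = (\<Sum>l<N. f i l) + (\<Sum>k<N. f k i) - f i i + (\<Sum>l<N. f j l) + (\<Sum>k<N. f k j) - f j j - 2 * f i j - 2 * f j i"
      by (rule pair_sum[OF ij])
    also have "\<dots> = 4 * real N * \<alpha> - 6 * \<alpha> - (E i + E j) / 2 + e i j"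
    proof -
      have R: "(\<Sum>l<N. f t l) = real N * \<alpha> - E t / 4" for t
        unfolding f_def E_def by (simp add: sum_subtractf sum_divide_distrib)
      have C: "(\<Sum>k<N. f k t) = real N * \<alpha> - E t / 4" for t
        unfolding f_def E_def by (simp add: sum_subtractf sum_divide_distrib e_sym)
      have "f t t = \<alpha>" for t unfolding f_def e_def by simp
      moreover have "f j i = f i j" unfolding f_def using e_sym by simp
      ultimately show ?thesis unfolding R C by (simp add: f_def algebra_simps)
    qed
    finally have "(\<Sum>q<K. c q * ind (lab i q \<noteq> lab j q)) = 2 * \<beta> + (4 * real N - 6) * \<alpha> + e i j"
      by (simp add: algebra_simps add_divide_distrib)
    also have "\<dots> = sq n (a i) (a j)" unfolding \<beta>_def e_def using ij by (simp add: field_simps)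
    finally show ?thesis .
  qed
  have aEm: "a i \<in> euclid m" if "i \<le> n" for i
    using aE that nm unfolding euclid_def by auto
  have a_sq: "sq m (a i) (a j) = sq n (a i) (a j)" if "i \<le> n" "j \<le> n" for i j
    unfolding sq_def
  proof (rule sum.mono_neutral_right)
    show "\<forall>t\<in>{..<m} - {..<n}. (a i t - a j t)^2 = 0" using aE that unfolding euclid_def by auto
  qed (use nm in auto)
  have dist: "\<forall>i\<le>n. \<forall>j\<le>n. sq m (u i) (u j) = sq m (a i) (a j)"
  proof (intro allI impI)
    fix i j assume ij: "i \<le> n" "j \<le> n"
    show "sq m (u i) (u j) = sq m (a i) (a j)"
    proof (cases "i = j")
      case False
      then show ?thesis using claim2 claim3[OF False] ij a_sq unfolding N_def by simp
    qed simp
  qed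
  obtain F where F: "isoE m F" "\<forall>i\<le>n. F (u i) = a i"
    using extend_iso[of n u m a] uE aEm dist by blast
  define Em where "Em = euclid m"
  have bijF: "bij_betw F Em Em" using F(1) unfolding isoE_def Em_def by simp
  define Finv where "Finv = the_inv_into Em F"
  have FE: "F x \<in> Em" if "x \<in> Em" for x using bijF that unfolding bij_betw_def by auto
  have FFinv: "F (Finv x) = x" if "x \<in> Em" for x
    unfolding Finv_def using bijF that by (rule f_the_inv_into_f_bij_betw)
  have FinvE: "Finv x \<in> Em" if "x \<in> Em" for x
    unfolding Finv_def using bijF that by (intro the_inv_into_into) (auto simp: bij_betw_def)
  have FinvF: "Finv (F x) = x" if "x \<in> Em" for x
    unfolding Finv_def using bijF that by (intro the_inv_into_f_f) (auto simp: bij_betw_def)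
  have Fsq: "sq m (F x) (F y) = sq m x y" if "x \<in> Em" "y \<in> Em" for x y
    using F(1) that unfolding isoE_def Em_def by simp
  have rotE: "rot K p g x \<in> Em" if "x \<in> Em" for g x
    using rot_closed that unfolding Em_def m_def by simp
  define T where "T g x = F (rot K p g (Finv x))" for g x
  have grpG: "group G" unfolding G_def by simp
  have act: "group_action G Em (\<lambda>g. \<lambda>x\<in>Em. T g x)"
  proof (rule action_from_T[OF grpG])
    show "T g x \<in> Em" if "g \<in> carrier G" "x \<in> Em" for g x
      unfolding T_def using that by (intro FE rotE FinvE)
    show "T (g \<otimes>\<^bsub>G\<^esub> h) x = T g (T h x)" if "g \<in> carrier G" "h \<in> carrier G" "x \<in> Em" for g h x
      unfolding T_def G_def rot_mult[OF p0] using that by (simp add: FinvF rotE FinvE)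
    show "T \<one>\<^bsub>G\<^esub> x = x" if "x \<in> Em" for x
      unfolding T_def G_def rot_one using that by (simp add: FFinv)
  qed
  have isom: "edist m ((\<lambda>x\<in>Em. T g x) x) ((\<lambda>x\<in>Em. T g x) y) = edist m x y"
    if "x \<in> Em" "y \<in> Em" for g x y
  proof -
    have "sq m (T g x) (T g y) = sq m x y"
      unfolding T_def using that
      by (simp add: Fsq rotE FinvE rot_iso[of K p, folded m_def] FFinv flip: Fsq[OF FinvE FinvE])
    then show ?thesis using that by (simp add: edist_sq)
  qed
  have wEm: "w \<in> Em" using wE Em_def by simp
  have orb: "a ` {..n} \<subseteq> orbit G (\<lambda>g. \<lambda>x\<in>Em. T g x) (F w)"
  proof
    fix y assume "y \<in> a ` {..n}"
    then obtain i where i: "i \<le> n" "y = a i" by auto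
    have "(\<lambda>x\<in>Em. T g x) (F w) = F (rot K p g w)" for g
      using FE[OF wEm] unfolding T_def by (simp add: FinvF wEm)
    then have "(\<lambda>x\<in>Em. T g x) (F w) = y" if "g = gg i" for g
      using F(2) i that unfolding u_def by simp
    then show "y \<in> orbit G (\<lambda>g. \<lambda>x\<in>Em. T g x) (F w)"
      unfolding orbit_def using gg_carrier[of i] by blast
  qed
  have ptor: "p_torus p G" unfolding p_torus_def G_def using K1 by auto
  have X: "a ` {..n} \<subseteq> euclid n" using aE by auto
  have Y: "\<exists>x\<in>euclid m. a ` {..n} \<subseteq> orbit G (\<lambda>g. \<lambda>x\<in>Em. T g x) x"
    using FE[OF wEm] orb unfolding Em_def by blast
  have Z: "\<forall>g\<in>carrier G. \<forall>x\<in>euclid m. \<forall>y\<in>euclid m.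
       edist m ((\<lambda>x\<in>Em. T g x) x) ((\<lambda>x\<in>Em. T g x) y) = edist m x y"
    using isom unfolding Em_def by blast
  show ?thesis unfolding sub_p_toral_def
    using X nm ptor act[unfolded Em_def] Y Z[folded Em_def] unfolding Em_def by blast
qed

lemma edist_sym: "edist m x y = edist m y x"
  unfolding edist_sq by (simp add: sq_sym)

lemma edist_tri: "edist m x z \<le> edist m x y + edist m y z"
proof -
  have "edist m x z = L2_set (\<lambda>i. (x i - y i) + (y i - z i)) {..<m}"
    unfolding edist_def L2_set_def by simp
  also have "\<dots> \<le> L2_set (\<lambda>i. x i - y i) {..<m} + L2_set (\<lambda>i. y i - z i) {..<m}"
    by (rule L2_set_triangle_ineq)
  also have "\<dots> = edist m x y + edist m y z" unfolding edist_def L2_set_def by simp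
  finally show ?thesis .
qed

theorem lemma7:
  fixes n :: nat and s :: "nat \<Rightarrow> nat \<Rightarrow> real"
  assumes "regular_simplex n s"
  shows "\<exists>\<delta>>0. \<forall>a :: nat \<Rightarrow> nat \<Rightarrow> real.
           (\<forall>i\<le>n. a i \<in> euclid n \<and> edist n (a i) (s i) < \<delta>) \<longrightarrow>
           (\<forall>p::nat. prime p \<longrightarrow> sub_p_toral p n (a ` {..n}))"
proof -
  obtain d where d: "d > 0" "\<forall>i\<le>n. \<forall>j\<le>n. i \<noteq> j \<longrightarrow> edist n (s i) (s j) = d"
    using assms unfolding regular_simplex_def by auto
  define N where "N = real (Suc n)"
  have N1: "N \<ge> 1" unfolding N_def by simp
  define \<delta> where "\<delta> = d / (16 * N)"
  have \<delta>pos: "\<delta> > 0" unfolding \<delta>_def using d N1 by simp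
  have \<delta>d: "\<delta> \<le> d" unfolding \<delta>_def using d N1 by (simp add: field_simps)
  have \<delta>8: "8 * \<delta> * d = d^2 / (2 * N)" unfolding \<delta>_def using N1 by (simp add: field_simps power2_eq_square)
  show ?thesis
  proof (intro exI[of _ \<delta>] conjI allI impI \<delta>pos)
    fix a :: "nat \<Rightarrow> nat \<Rightarrow> real" and p :: nat
    assume A: "\<forall>i\<le>n. a i \<in> euclid n \<and> edist n (a i) (s i) < \<delta>" and p: "prime p"
    show "sub_p_toral p n (a ` {..n})"
    proof (rule main_construct[where D = "d^2", OF p])
      show "\<forall>i\<le>n. a i \<in> euclid n" using A by auto
      show "d^2 > 0" using d by simp
      show "\<forall>k\<le>n. \<forall>l\<le>n. k \<noteq> l \<longrightarrow> \<bar>sq n (a k) (a l) - d^2\<bar> \<le> d^2 / (2 * real (Suc n))"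
      proof (intro allI impI)
        fix k l assume kl: "k \<le> n" "l \<le> n" "k \<noteq> l"
        define X where "X = edist n (a k) (a l)"
        have X0: "X \<ge> 0" unfolding X_def edist_sq using sq_nonneg[of n "a k" "a l"] by simp
        have sqX: "sq n (a k) (a l) = X^2" unfolding X_def edist_sq using sq_nonneg[of n "a k" "a l"] by simp
        have dk: "edist n (a k) (s k) < \<delta>" "edist n (a l) (s l) < \<delta>" using A kl by auto
        have dkl: "edist n (s k) (s l) = d" using d kl by auto
        have "X \<le> edist n (a k) (s k) + edist n (s k) (a l)" unfolding X_def by (rule edist_tri)
        also have "edist n (s k) (a l) \<le> edist n (s k) (s l) + edist n (s l) (a l)" by (rule edist_tri)
        finally have up: "X < d + 2 * \<delta>" using dk dkl edist_sym[of n "s l" "a l"] by linarith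
        have "d \<le> edist n (s k) (a k) + edist n (a k) (s l)" using dkl edist_tri by metis
        also have "edist n (a k) (s l) \<le> X + edist n (a l) (s l)" unfolding X_def by (rule edist_tri)
        finally have lo: "d < X + 2 * \<delta>" using dk edist_sym[of n "s k" "a k"] by linarith
        have fac: "X^2 - d^2 = (X - d) * (X + d)" by (simp add: power2_eq_square algebra_simps)
        have "\<bar>X^2 - d^2\<bar> = \<bar>X - d\<bar> * (X + d)" unfolding fac abs_mult using X0 d by simp
        also have "\<dots> \<le> (2 * \<delta>) * (4 * d)"
          by (rule mult_mono) (use up lo \<delta>d X0 d in auto)
        also have "\<dots> = d^2 / (2 * N)" using \<delta>8 by simp
        finally show "\<bar>sq n (a k) (a l) - d^2\<bar> \<le> d^2 / (2 * real (Suc n))" unfolding sqX N_def .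
      qed
    qed
  qed
qed

end
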